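(* Let $V$ be a topological real vector space and $C$ a cone in $V$. Assume $X_1,\dots,X_m,Y_1,\dots,Y_n$ are nonempty $C$-antichain-convex subsets of $V$, and put $X=X_1+\dots+X_m$ and $Y=Y_1+\dots+Y_n$. Suppose $\operatorname{int}(X)\neq\emptyset$ and $\operatorname{int}(X)\cap Y=\emptyset$. (1) If $X_1$ is $C$-upward, then $X$ and $Y$ are separated. (2) If $X_1$ is $C$-downward, then $X$ and $Y$ are separated.
   Context: A cone in $V$ is a subset $C$ with $\lambda C\subseteq C$ for all $\lambda>0$ (possibly empty, need not contain $0$). $S\subseteq V$ is $C$-antichain-convex iff for all $x,y\in S$ and $\lambda\in[0,1]$ with $y-x\notin C\cup(-C)$ one has $\lambda x+(1-\lambda)y\in S$. $S$ is $C$-upward iff $S+C\subseteq S$; $C$-downward iff $S-C\subseteq S$. Sums are Minkowski sums. $V^*$ is the space of continuous linear functionals on $V$. $X$ and $Y$ are separated iff there is $f\in V^*\setminus\{0\}$ with $\sup f[X]\le\inf f[Y]$. *)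

theory Defs
  imports "HOL-Analysis.Analysis"
begin

class topological_real_vector = real_vector + topological_ab_group_add +
  assumes continuous_scaleR_joint:
    "((\<lambda>p. fst p *\<^sub>R snd p) \<longlongrightarrow> a *\<^sub>R x) (nhds a \<times>\<^sub>F nhds x)"

definition is_cone :: "'a::real_vector set \<Rightarrow> bool" where
  "is_cone C \<longleftrightarrow> (\<forall>l::real. l > 0 \<longrightarrow> (\<forall>c\<in>C. l *\<^sub>R c \<in> C))"

definition antichain_convex :: "'a::real_vector set \<Rightarrow> 'a set \<Rightarrow> bool" where
  "antichain_convex C S \<longleftrightarrow>
     (\<forall>x\<in>S. \<forall>y\<in>S. \<forall>l::real. 0 \<le> l \<and> l \<le> 1 \<and> y - x \<notin> C \<union> uminus ` C
        \<longrightarrow> l *\<^sub>R x + (1 - l) *\<^sub>R y \<in> S)"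

definition upward :: "'a::real_vector set \<Rightarrow> 'a set \<Rightarrow> bool" where
  "upward C S \<longleftrightarrow> (\<forall>s\<in>S. \<forall>c\<in>C. s + c \<in> S)"

definition downward :: "'a::real_vector set \<Rightarrow> 'a set \<Rightarrow> bool" where
  "downward C S \<longleftrightarrow> (\<forall>s\<in>S. \<forall>c\<in>C. s - c \<in> S)"

definition msum :: "(nat \<Rightarrow> 'a::real_vector set) \<Rightarrow> nat \<Rightarrow> 'a set" where
  "msum A k = {\<Sum>i<k. a i | a. \<forall>i<k. a i \<in> A i}"

definition separated :: "'a::topological_real_vector set \<Rightarrow> 'a set \<Rightarrow> bool" where
  "separated X Y \<longleftrightarrow> (\<exists>f :: 'a \<Rightarrow> real. linear f \<and> continuous_on UNIV f \<and> f \<noteq> (\<lambda>_. 0) \<and>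
      (SUP x\<in>X. ereal (f x)) \<le> (INF y\<in>Y. ereal (f y)))"

end

theory Submission
  imports Defs
begin


lemma tendsto_scaleR_gen:
  fixes g :: "'b \<Rightarrow> 'a::topological_real_vector"
  assumes "(f \<longlongrightarrow> a) F" "(g \<longlongrightarrow> x) F"
  shows "((\<lambda>t. f t *\<^sub>R g t) \<longlongrightarrow> a *\<^sub>R x) F"
proof -
  have "LIM t F. (f t, g t) :> nhds a \<times>\<^sub>F nhds x"
    by (rule filterlim_Pair[OF assms])
  from filterlim_compose[OF continuous_scaleR_joint this]
  show ?thesis by simp
qed

lemma cont_scaleR_gen:
  fixes g :: "'b::topological_space \<Rightarrow> 'a::topological_real_vector"
  assumes "continuous_on S f" "continuous_on S g"
  shows "continuous_on S (\<lambda>t. f t *\<^sub>R g t)"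
  using assms unfolding continuous_on_def by (auto intro: tendsto_scaleR_gen)

lemma open_affine_image:
  fixes U :: "'a::topological_real_vector set"
  assumes "open U" "c \<noteq> 0"
  shows "open ((\<lambda>u. v + c *\<^sub>R u) ` U)"
proof -
  have eq: "(\<lambda>u. v + c *\<^sub>R u) ` U = (\<lambda>w. (1/c) *\<^sub>R (w - v)) -` U"
  proof
    show "(\<lambda>u. v + c *\<^sub>R u) ` U \<subseteq> (\<lambda>w. (1/c) *\<^sub>R (w - v)) -` U"
      using assms(2) by auto
    show "(\<lambda>w. (1/c) *\<^sub>R (w - v)) -` U \<subseteq> (\<lambda>u. v + c *\<^sub>R u) ` U"
    proof
      fix w assume "w \<in> (\<lambda>w. (1/c) *\<^sub>R (w - v)) -` U"
      moreover have "w = v + c *\<^sub>R ((1/c) *\<^sub>R (w - v))" using assms(2) by simp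
      ultimately show "w \<in> (\<lambda>u. v + c *\<^sub>R u) ` U" by blast
    qed
  qed
  have "continuous_on UNIV (\<lambda>w. (1/c) *\<^sub>R (w - v))"
    by (intro cont_scaleR_gen continuous_on_const continuous_on_diff continuous_on_id)
  then show ?thesis unfolding eq using assms(1) by (rule open_vimage[rotated])
qed

lemma open_translate:
  fixes U :: "'a::topological_real_vector set"
  assumes "open U"
  shows "open ((\<lambda>u. v + u) ` U)"
  using open_affine_image[OF assms, of 1 v] by simp

lemma cont_line:
  fixes e x :: "'a::topological_real_vector"
  shows "continuous_on UNIV (\<lambda>s::real. e + s *\<^sub>R x)"
  by (intro cont_scaleR_gen continuous_on_const continuous_on_add continuous_on_id)

lemma small_line:
  fixes e x :: "'a::topological_real_vector"
  assumes "open D" "e \<in> D"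
  shows "\<exists>\<epsilon>>0. e + \<epsilon> *\<^sub>R x \<in> D \<and> e - \<epsilon> *\<^sub>R x \<in> D"
proof -
  have "open ((\<lambda>s::real. e + s *\<^sub>R x) -` D)"
    using open_vimage[OF assms(1) cont_line] .
  moreover have "0 \<in> (\<lambda>s::real. e + s *\<^sub>R x) -` D" using assms by simp
  ultimately obtain d where d: "d > 0" "ball 0 d \<subseteq> (\<lambda>s::real. e + s *\<^sub>R x) -` D"
    using open_contains_ball by blast
  have "d/2 \<in> ball 0 d" "-(d/2) \<in> ball 0 d" using d(1) by auto
  then have "e + (d/2) *\<^sub>R x \<in> D" "e + (-(d/2)) *\<^sub>R x \<in> D" using d(2) by blast+
  then show ?thesis using d(1) by (intro exI[of _ "d/2"]) auto
qed

definition cone_fam :: "'a::real_vector set \<Rightarrow> 'a set set" where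
  "cone_fam D = {M. D \<subseteq> M \<and> 0 \<notin> M \<and> (\<forall>a\<in>M. \<forall>b\<in>M. a + b \<in> M) \<and>
     (\<forall>c::real. c > 0 \<longrightarrow> (\<forall>a\<in>M. c *\<^sub>R a \<in> M))}"

lemma cone_fam_nonempty:
  assumes "convex D" "0 \<notin> D"
  shows "{c *\<^sub>R d | c d. c > 0 \<and> d \<in> D} \<in> cone_fam D"
  unfolding cone_fam_def mem_Collect_eq[of _ "\<lambda>M. D \<subseteq> M \<and> _ M"]
proof (intro conjI ballI allI impI)
  let ?K = "{c *\<^sub>R d | c d. c > 0 \<and> d \<in> D}"
  show "D \<subseteq> ?K"
  proof
    fix d assume "d \<in> D" then show "d \<in> ?K" by (intro CollectI exI[of _ 1] exI[of _ d]) auto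
  qed
  show "0 \<notin> ?K" using assms(2) by auto
  fix a b assume "a \<in> ?K" "b \<in> ?K"
  then obtain c1 d1 c2 d2 where h: "a = c1 *\<^sub>R d1" "c1 > 0" "d1 \<in> D" "b = c2 *\<^sub>R d2" "c2 > 0" "d2 \<in> D"
    by blast
  have "(c1/(c1+c2)) *\<^sub>R d1 + (c2/(c1+c2)) *\<^sub>R d2 \<in> D"
    using assms(1) h unfolding convex_def by (auto simp: add_divide_distrib[symmetric])
  moreover have "a + b = (c1+c2) *\<^sub>R ((c1/(c1+c2)) *\<^sub>R d1 + (c2/(c1+c2)) *\<^sub>R d2)"
    using h by (simp add: scaleR_add_right)
  ultimately show "a + b \<in> ?K" using h by (intro CollectI exI[of _ "c1+c2"]) auto
next
  let ?K = "{c *\<^sub>R d | c d. c > 0 \<and> d \<in> D}"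
  fix c :: real and a assume "c > 0" "a \<in> ?K"
  then obtain c1 d1 where h: "a = c1 *\<^sub>R d1" "c1 > 0" "d1 \<in> D" by blast
  then show "c *\<^sub>R a \<in> ?K" using \<open>c > 0\<close> by (intro CollectI exI[of _ "c*c1"] exI[of _ d1]) auto
qed

lemma cone_fam_chain:
  assumes "\<C> \<noteq> {}" "subset.chain (cone_fam D) \<C>"
  shows "\<Union>\<C> \<in> cone_fam D"
proof -
  have sub: "\<C> \<subseteq> cone_fam D" and ch: "\<forall>X\<in>\<C>. \<forall>Y\<in>\<C>. X \<subseteq> Y \<or> Y \<subseteq> X"
    using assms(2) unfolding subset.chain_def by auto
  show ?thesis unfolding cone_fam_def
  proof (intro CollectI conjI ballI allI impI)
    show "D \<subseteq> \<Union>\<C>" using assms(1) sub unfolding cone_fam_def by blast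
    show "0 \<notin> \<Union>\<C>" using sub unfolding cone_fam_def by blast
    fix a b assume "a \<in> \<Union>\<C>" "b \<in> \<Union>\<C>"
    then obtain X Y where "X \<in> \<C>" "Y \<in> \<C>" "a \<in> X" "b \<in> Y" by blast
    with ch have "(a \<in> X \<and> b \<in> X \<and> X \<in> \<C>) \<or> (a \<in> Y \<and> b \<in> Y \<and> Y \<in> \<C>)" by blast
    then show "a + b \<in> \<Union>\<C>" using sub unfolding cone_fam_def by blast
  next
    fix c :: real and a assume "c > 0" "a \<in> \<Union>\<C>"
    then show "c *\<^sub>R a \<in> \<Union>\<C>" using sub unfolding cone_fam_def by blast
  qed
qed

lemma maximal_cone_halfspace:
  fixes M :: "'a::real_vector set"
  assumes M: "M \<in> cone_fam D" and max: "\<forall>X\<in>cone_fam D. M \<subseteq> X \<longrightarrow> X = M"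
    and x: "x \<noteq> 0" "x \<notin> M"
  shows "- x \<in> M"
proof (rule ccontr)
  assume nx: "- x \<notin> M"
  let ?M = "{m + s *\<^sub>R x | m s. m \<in> insert 0 M \<and> s \<ge> 0 \<and> (m \<in> M \<or> s > 0)}"
  have Mp: "D \<subseteq> M" "0 \<notin> M" "\<And>a b. a \<in> M \<Longrightarrow> b \<in> M \<Longrightarrow> a + b \<in> M"
    "\<And>c a. c > 0 \<Longrightarrow> a \<in> M \<Longrightarrow> c *\<^sub>R a \<in> M"
    using M unfolding cone_fam_def by auto
  have "?M \<in> cone_fam D" unfolding cone_fam_def mem_Collect_eq[of _ "\<lambda>M. D \<subseteq> M \<and> _ M"]
  proof (intro conjI ballI allI impI)
    show "D \<subseteq> ?M"
    proof
      fix d assume "d \<in> D" then show "d \<in> ?M" using Mp(1) by (intro CollectI exI[of _ d] exI[of _ 0]) auto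
    qed
    show "0 \<notin> ?M"
    proof
      assume "0 \<in> ?M"
      then obtain m s where h: "0 = m + s *\<^sub>R x" "m \<in> insert 0 M" "s \<ge> 0" "m \<in> M \<or> s > 0" by blast
      show False
      proof (cases "m = 0")
        case True
        then show ?thesis using h x(1) Mp(2) by auto
      next
        case False
        then have "m \<in> M" using h by auto
        show ?thesis
        proof (cases "s = 0")
          case True then show ?thesis using h \<open>m \<in> M\<close> Mp(2) by auto
        next
          case False
          then have "s > 0" using h by auto
          have "m = - (s *\<^sub>R x)" using h(1) by (simp add: eq_neg_iff_add_eq_0)
          then have "- x = (1/s) *\<^sub>R m" using \<open>s > 0\<close> by simp
          then show ?thesis using Mp(4)[of "1/s" m] \<open>s > 0\<close> \<open>m \<in> M\<close> nx by auto
        qed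
      qed
    qed
    fix a b assume "a \<in> ?M" "b \<in> ?M"
    then obtain m1 s1 m2 s2 where h: "a = m1 + s1 *\<^sub>R x" "m1 \<in> insert 0 M" "s1 \<ge> 0" "m1 \<in> M \<or> s1 > 0"
      "b = m2 + s2 *\<^sub>R x" "m2 \<in> insert 0 M" "s2 \<ge> 0" "m2 \<in> M \<or> s2 > 0" by blast
    have e: "a + b = (m1 + m2) + (s1 + s2) *\<^sub>R x" using h by (simp add: algebra_simps)
    have "m1 + m2 \<in> insert 0 M" using h Mp(3) by auto
    moreover have "m1 + m2 \<in> M \<or> s1 + s2 > 0" using h Mp(3) by auto
    ultimately show "a + b \<in> ?M" using e h by (intro CollectI exI[of _ "m1+m2"] exI[of _ "s1+s2"]) auto
  next
    fix c :: real and a assume "c > 0" "a \<in> ?M"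
    then obtain m s where h: "a = m + s *\<^sub>R x" "m \<in> insert 0 M" "s \<ge> 0" "m \<in> M \<or> s > 0" by blast
    have e: "c *\<^sub>R a = c *\<^sub>R m + (c * s) *\<^sub>R x" using h by (simp add: algebra_simps)
    have "c *\<^sub>R m \<in> insert 0 M" "c *\<^sub>R m \<in> M \<or> c * s > 0" using h Mp(4)[OF \<open>c > 0\<close>] \<open>c > 0\<close> by auto
    then show "c *\<^sub>R a \<in> ?M" using e h \<open>c > 0\<close> by (intro CollectI exI[of _ "c *\<^sub>R m"] exI[of _ "c * s"]) auto
  qed
  moreover have "M \<subseteq> ?M"
  proof
    fix m assume "m \<in> M" then show "m \<in> ?M" by (intro CollectI exI[of _ m] exI[of _ 0]) auto
  qed
  ultimately have "?M = M" using max by blast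
  moreover have "x \<in> ?M" by (intro CollectI exI[of _ 0] exI[of _ 1]) auto
  ultimately show False using x(2) by simp
qed

lemma separation_open_convex:
  fixes D :: "'a::topological_real_vector set"
  assumes oD: "open D" and cD: "convex D" and eD: "e \<in> D" and zD: "0 \<notin> D"
  shows "\<exists>f::'a\<Rightarrow>real. linear f \<and> continuous_on UNIV f \<and> f \<noteq> (\<lambda>_. 0) \<and> (\<forall>d\<in>D. f d \<ge> 0)"
proof -
  have fne: "cone_fam D \<noteq> {}" using cone_fam_nonempty[OF cD zD] by blast
  have "\<exists>M\<in>cone_fam D. \<forall>X\<in>cone_fam D. M \<subseteq> X \<longrightarrow> X = M"
    by (rule subset_Zorn_nonempty[OF fne cone_fam_chain])
  then obtain M where M: "M \<in> cone_fam D" and max: "\<forall>X\<in>cone_fam D. M \<subseteq> X \<longrightarrow> X = M"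
    by blast
  have Mp: "D \<subseteq> M" "0 \<notin> M" "\<And>a b. a \<in> M \<Longrightarrow> b \<in> M \<Longrightarrow> a + b \<in> M"
    "\<And>c a. c > 0 \<Longrightarrow> a \<in> M \<Longrightarrow> c *\<^sub>R a \<in> M"
    using M unfolding cone_fam_def by auto
  have eM: "e \<in> M" using Mp(1) eD by auto
  have half: "\<And>x. x \<noteq> 0 \<Longrightarrow> x \<notin> M \<Longrightarrow> - x \<in> M"
    using maximal_cone_halfspace[OF M max] by blast
  have notboth: "\<And>x. x \<in> M \<Longrightarrow> - x \<notin> M"
  proof
    fix x assume "x \<in> M" "- x \<in> M"
    then have "x + - x \<in> M" by (rule Mp(3))
    then show False using Mp(2) by simp
  qed
  have nM: "\<And>z s. z \<notin> M \<Longrightarrow> s > 0 \<Longrightarrow> s *\<^sub>R e - z \<in> M"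
  proof -
    fix z s assume z: "z \<notin> M" and s: "(s::real) > 0"
    have se: "s *\<^sub>R e \<in> M" using Mp(4)[OF s eM] .
    show "s *\<^sub>R e - z \<in> M"
    proof (cases "z = 0")
      case True
      then have "s *\<^sub>R e - z = s *\<^sub>R e" by simp
      then show ?thesis using se by metis
    next
      case False
      then have "- z \<in> M" using half z by blast
      then have "s *\<^sub>R e + - z \<in> M" by (rule Mp(3)[OF se])
      then show ?thesis by (simp only: diff_conv_add_uminus)
    qed
  qed
  define T where "T x = {t::real. x - t *\<^sub>R e \<in> M}" for x
  define f where "f x = Sup (T x)" for x
  have down: "\<And>x t s. t \<in> T x \<Longrightarrow> s < t \<Longrightarrow> s \<in> T x"
  proof -
    fix x t s assume t: "t \<in> T x" and st: "s < t"
    have "x - s *\<^sub>R e = (x - t *\<^sub>R e) + (t - s) *\<^sub>R e" by (simp add: algebra_simps)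
    moreover have "(t - s) *\<^sub>R e \<in> M" using Mp(4)[OF _ eM] st by simp
    moreover have "x - t *\<^sub>R e \<in> M" using t unfolding T_def by simp
    ultimately have "x - s *\<^sub>R e \<in> M" using Mp(3) by metis
    then show "s \<in> T x" unfolding T_def by simp
  qed
  have ne_bdd: "\<And>x. T x \<noteq> {} \<and> bdd_above (T x)"
  proof -
    fix x
    obtain \<epsilon> where \<epsilon>: "\<epsilon> > 0" "e + \<epsilon> *\<^sub>R x \<in> D" "e - \<epsilon> *\<^sub>R x \<in> D"
      using small_line[OF oD eD] by blast
    have "(1/\<epsilon>) *\<^sub>R (e + \<epsilon> *\<^sub>R x) \<in> M" using Mp(4)[of "1/\<epsilon>"] Mp(1) \<epsilon> by auto
    moreover have "(1/\<epsilon>) *\<^sub>R (e + \<epsilon> *\<^sub>R x) = x - (- (1/\<epsilon>)) *\<^sub>R e" using \<epsilon>(1)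
      by (simp add: algebra_simps)
    ultimately have "- (1/\<epsilon>) \<in> T x" unfolding T_def by simp
    moreover have "\<forall>t\<in>T x. t \<le> 1/\<epsilon>"
    proof (rule ballI, rule ccontr)
      fix t assume "t \<in> T x" "\<not> t \<le> 1/\<epsilon>"
      then have "1/\<epsilon> \<in> T x" using down by auto
      then have "\<epsilon> *\<^sub>R (x - (1/\<epsilon>) *\<^sub>R e) \<in> M" using Mp(4)[OF \<epsilon>(1)] unfolding T_def by auto
      moreover have "\<epsilon> *\<^sub>R (x - (1/\<epsilon>) *\<^sub>R e) = - (e - \<epsilon> *\<^sub>R x)" using \<epsilon>(1)
        by (simp add: algebra_simps)
      ultimately have "- (e - \<epsilon> *\<^sub>R x) \<in> M" by simp
      moreover have "e - \<epsilon> *\<^sub>R x \<in> M" using \<epsilon>(3) Mp(1) by blast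
      ultimately show False using notboth by blast
    qed
    ultimately show "T x \<noteq> {} \<and> bdd_above (T x)" unfolding bdd_above_def by blast
  qed
  have upper: "\<And>x t. t \<in> T x \<Longrightarrow> t \<le> f x"
    unfolding f_def using ne_bdd by (simp add: cSup_upper)
  have lower: "\<And>x t. t < f x \<Longrightarrow> t \<in> T x"
  proof -
    fix x t assume "t < f x"
    then obtain t' where "t' \<in> T x" "t < t'" using less_cSupD[of "T x" t] ne_bdd unfolding f_def by blast
    then show "t \<in> T x" using down by blast
  qed
  have sup: "\<And>x y. f x + f y \<le> f (x + y)"
  proof -
    fix x y
    show "f x + f y \<le> f (x + y)"
    proof (rule dense_le)
      fix t assume t: "t < f x + f y"
      define a where "a = f x - (f x + f y - t) / 2"
      have "a < f x" "t - a < f y" using t unfolding a_def by (simp_all add: field_simps)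
      then have "a \<in> T x" "t - a \<in> T y" using lower by blast+
      then have "(x - a *\<^sub>R e) + (y - (t - a) *\<^sub>R e) \<in> M" using Mp(3) unfolding T_def by auto
      moreover have "(x - a *\<^sub>R e) + (y - (t - a) *\<^sub>R e) = (x + y) - t *\<^sub>R e"
        by (simp add: algebra_simps)
      ultimately show "t \<le> f (x + y)" using upper unfolding T_def by auto
    qed
  qed
  have neg: "\<And>x. - f x \<le> f (- x)"
  proof -
    fix x
    show "- f x \<le> f (- x)"
    proof (rule dense_le)
      fix s assume s: "s < - f x"
      define t'' where "t'' = (f x - s) / 2"
      have "t'' \<notin> T x" using upper[of t'' x] s unfolding t''_def by auto
      then have "x - t'' *\<^sub>R e \<notin> M" unfolding T_def by auto
      from nM[OF this, of "- s - t''"] have "(- s - t'') *\<^sub>R e - (x - t'' *\<^sub>R e) \<in> M"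
        using s unfolding t''_def by auto
      moreover have "(- s - t'') *\<^sub>R e - (x - t'' *\<^sub>R e) = - x - s *\<^sub>R e"
        by (simp add: algebra_simps)
      ultimately show "s \<le> f (- x)" using upper unfolding T_def by auto
    qed
  qed
  have f0: "f 0 = 0" using sup[of 0 0] neg[of 0] by simp
  have odd: "\<And>x. f (- x) = - f x"
  proof -
    fix x
    have "f x + f (- x) \<le> f 0" using sup[of x "- x"] by simp
    then show "f (- x) = - f x" using neg[of x] f0 by linarith
  qed
  have add: "\<And>x y. f (x + y) = f x + f y"
  proof -
    fix x y
    have "f (- x + - y) \<ge> f (- x) + f (- y)" using sup by blast
    moreover have "- x + - y = - (x + y)" by simp
    ultimately have "- f (x + y) \<ge> - f x - f y" using odd[of "x+y"] odd[of x] odd[of y]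
      by (metis diff_conv_add_uminus)
    then show "f (x + y) = f x + f y" using sup[of x y] by linarith
  qed
  have pos: "\<And>c x. c > 0 \<Longrightarrow> c * f x \<le> f (c *\<^sub>R x)"
  proof -
    fix c x assume c: "(c::real) > 0"
    show "c * f x \<le> f (c *\<^sub>R x)"
    proof (rule dense_le)
      fix t assume "t < c * f x"
      then have "t / c < f x" using c by (simp add: divide_less_eq mult.commute)
      then have "x - (t/c) *\<^sub>R e \<in> M" using lower unfolding T_def by auto
      then have "c *\<^sub>R (x - (t/c) *\<^sub>R e) \<in> M" using Mp(4)[OF c] by auto
      moreover have "c *\<^sub>R (x - (t/c) *\<^sub>R e) = c *\<^sub>R x - t *\<^sub>R e" using c by (simp add: algebra_simps)
      ultimately show "t \<le> f (c *\<^sub>R x)" using upper unfolding T_def by auto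
    qed
  qed
  have hom_pos: "\<And>c x. c > 0 \<Longrightarrow> f (c *\<^sub>R x) = c * f x"
  proof -
    fix c x assume c: "(c::real) > 0"
    have "(1/c) * f (c *\<^sub>R x) \<le> f ((1/c) *\<^sub>R (c *\<^sub>R x))" using pos[of "1/c" "c *\<^sub>R x"] c by simp
    then have "(1/c) * f (c *\<^sub>R x) \<le> f x" using c by simp
    then have "f (c *\<^sub>R x) \<le> c * f x" using c by (simp add: divide_le_eq mult.commute)
    then show "f (c *\<^sub>R x) = c * f x" using pos[OF c, of x] by linarith
  qed
  have hom: "\<And>c x. f (c *\<^sub>R x) = c * f x"
  proof -
    fix c :: real and x
    consider "c > 0" | "c = 0" | "c < 0" by linarith
    then show "f (c *\<^sub>R x) = c * f x"
    proof cases
      case 1 then show ?thesis using hom_pos by blast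
    next
      case 2 then show ?thesis using f0 by simp
    next
      case 3
      have "f (c *\<^sub>R x) = f (- ((- c) *\<^sub>R x))" by simp
      also have "\<dots> = - ((- c) * f x)" using odd hom_pos[of "-c" x] 3 by simp
      finally show ?thesis by simp
    qed
  qed
  have lin: "linear f" by (rule linearI) (simp_all add: add hom)
  have fe: "f e \<ge> 1/2"
  proof -
    have "e - (1/2) *\<^sub>R e = 1 *\<^sub>R e - (1/2::real) *\<^sub>R e" by simp
    also have "\<dots> = (1 - 1/2::real) *\<^sub>R e" by (rule scaleR_diff_left[symmetric])
    also have "\<dots> = (1/2::real) *\<^sub>R e" by simp
    finally have "e - (1/2) *\<^sub>R e = (1/2::real) *\<^sub>R e" .
    then have "1/2 \<in> T e" using Mp(4)[OF _ eM, of "1/2"] unfolding T_def by simp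
    then show ?thesis using upper by blast
  qed
  have nonneg: "\<forall>d\<in>D. f d \<ge> 0"
  proof
    fix d assume "d \<in> D" then have "0 \<in> T d" using Mp(1) unfolding T_def by auto
    then show "f d \<ge> 0" using upper by blast
  qed
  have small: "\<And>\<epsilon>. \<epsilon> > 0 \<Longrightarrow> \<exists>W. open W \<and> 0 \<in> W \<and> (\<forall>u\<in>W. \<bar>f u\<bar> \<le> \<epsilon>)"
  proof -
    fix \<epsilon> :: real assume \<epsilon>: "\<epsilon> > 0"
    define W where "W = (\<lambda>u. e + (1/\<epsilon>) *\<^sub>R u) -` D \<inter> (\<lambda>u. e - (1/\<epsilon>) *\<^sub>R u) -` D"
    have c1: "continuous_on UNIV (\<lambda>u::'a. e + (1/\<epsilon>) *\<^sub>R u)"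
      by (intro cont_scaleR_gen continuous_on_const continuous_on_add continuous_on_id)
    have c2: "continuous_on UNIV (\<lambda>u::'a. e - (1/\<epsilon>) *\<^sub>R u)"
      by (intro cont_scaleR_gen continuous_on_const continuous_on_diff continuous_on_id)
    have "open W" unfolding W_def using open_vimage[OF oD c1] open_vimage[OF oD c2] by blast
    moreover have "0 \<in> W" unfolding W_def using eD by simp
    moreover have "\<forall>u\<in>W. \<bar>f u\<bar> \<le> \<epsilon>"
    proof
      fix u assume "u \<in> W"
      then have u1: "e + (1/\<epsilon>) *\<^sub>R u \<in> M" and u2: "e - (1/\<epsilon>) *\<^sub>R u \<in> M"
        unfolding W_def using Mp(1) by auto
      have "\<epsilon> *\<^sub>R (e + (1/\<epsilon>) *\<^sub>R u) = u - (- \<epsilon>) *\<^sub>R e" using \<epsilon> by (simp add: algebra_simps)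
      then have "- \<epsilon> \<in> T u" using Mp(4)[OF \<epsilon> u1] unfolding T_def by simp
      then have a: "- \<epsilon> \<le> f u" using upper by blast
      have "\<epsilon> *\<^sub>R (e - (1/\<epsilon>) *\<^sub>R u) = - u - (- \<epsilon>) *\<^sub>R e" using \<epsilon> by (simp add: algebra_simps)
      then have "- \<epsilon> \<in> T (- u)" using Mp(4)[OF \<epsilon> u2] unfolding T_def by simp
      then have "- \<epsilon> \<le> f (- u)" using upper by blast
      then show "\<bar>f u\<bar> \<le> \<epsilon>" using a odd[of u] by linarith
    qed
    ultimately show "\<exists>W. open W \<and> 0 \<in> W \<and> (\<forall>u\<in>W. \<bar>f u\<bar> \<le> \<epsilon>)" by blast
  qed
  have cont: "continuous_on UNIV f"
    unfolding continuous_on_topological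
  proof (intro ballI allI impI)
    fix x B assume "open B" "f x \<in> B"
    then obtain \<epsilon> where \<epsilon>: "\<epsilon> > 0" "ball (f x) \<epsilon> \<subseteq> B" using open_contains_ball by blast
    obtain W where W: "open W" "0 \<in> W" "\<forall>u\<in>W. \<bar>f u\<bar> \<le> \<epsilon>/2" using small[of "\<epsilon>/2"] \<epsilon> by auto
    have cd: "continuous_on UNIV (\<lambda>y::'a. y - x)"
      by (intro continuous_on_const continuous_on_diff continuous_on_id)
    have "open ((\<lambda>y. y - x) -` W)" using open_vimage[OF W(1) cd] .
    moreover have "x \<in> (\<lambda>y. y - x) -` W" using W by simp
    moreover have "\<forall>y\<in>UNIV. y \<in> (\<lambda>y. y - x) -` W \<longrightarrow> f y \<in> B"
    proof (intro ballI impI)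
      fix y assume "y \<in> (\<lambda>y. y - x) -` W"
      then have "\<bar>f (y - x)\<bar> \<le> \<epsilon>/2" using W by auto
      moreover have "f (y - x) = f y - f x" using add[of "y - x" x] by simp
      ultimately have "\<bar>f y - f x\<bar> < \<epsilon>" using \<epsilon>(1) by simp
      then have "dist (f x) (f y) < \<epsilon>" by (simp add: dist_real_def abs_minus_commute)
      then show "f y \<in> B" using \<epsilon>(2) by auto
    qed
    ultimately show "\<exists>A. open A \<and> x \<in> A \<and> (\<forall>y\<in>UNIV. y \<in> A \<longrightarrow> f y \<in> B)" by blast
  qed
  have "f e \<noteq> 0" using fe by linarith
  then have "f \<noteq> (\<lambda>_. 0)" by auto
  then show ?thesis using lin cont nonneg by blast
qed



lemma upward_ac_convex:
  assumes K: "is_cone K" and up: "upward K S" and ac: "antichain_convex K S"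
  shows "convex S"
  unfolding convex_def
proof (intro ballI allI impI)
  fix x y :: 'a and u v :: real
  assume x: "x \<in> S" and y: "y \<in> S" and uv: "0 \<le> u" "0 \<le> v" "u + v = 1"
  then have v: "v = 1 - u" by simp
  show "u *\<^sub>R x + v *\<^sub>R y \<in> S"
  proof (cases "y - x \<in> K \<union> uminus ` K")
    case False
    then show ?thesis using ac x y uv v unfolding antichain_convex_def by auto
  next
    case True
    then show ?thesis
    proof
      assume c: "y - x \<in> K"
      have e: "u *\<^sub>R x + v *\<^sub>R y = x + v *\<^sub>R (y - x)" unfolding v by (simp add: algebra_simps)
      show ?thesis
      proof (cases "v = 0")
        case True then show ?thesis using e x by simp
      next
        case False
        then have "v *\<^sub>R (y - x) \<in> K" using K c uv unfolding is_cone_def by auto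
        then show ?thesis using e x up unfolding upward_def by auto
      qed
    next
      assume "y - x \<in> uminus ` K"
      then have c: "x - y \<in> K" by (metis image_iff minus_diff_eq minus_minus)
      have e: "u *\<^sub>R x + v *\<^sub>R y = y + u *\<^sub>R (x - y)" unfolding v by (simp add: algebra_simps)
      show ?thesis
      proof (cases "u = 0")
        case True then show ?thesis using e y by simp
      next
        case False
        then have "u *\<^sub>R (x - y) \<in> K" using K c uv unfolding is_cone_def by auto
        then show ?thesis using e y up unfolding upward_def by auto
      qed
    qed
  qed
qed

lemma ac_cases:
  assumes "x \<in> S" "y \<in> S" "antichain_convex K S"
  obtains (ac) "\<And>l::real. 0 \<le> l \<Longrightarrow> l \<le> 1 \<Longrightarrow> l *\<^sub>R x + (1 - l) *\<^sub>R y \<in> S"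
    | (pos) c where "c \<in> K" "y = x + c"
    | (neg) c where "c \<in> K" "x = y + c"
proof (cases "y - x \<in> K \<union> uminus ` K")
  case False
  then show ?thesis using assms ac unfolding antichain_convex_def by auto
next
  case True
  then show ?thesis
  proof
    assume "y - x \<in> K" then show ?thesis using pos[of "y - x"] by simp
  next
    assume "y - x \<in> uminus ` K"
    then have c: "x - y \<in> K" by (metis image_iff minus_diff_eq minus_minus)
    then show ?thesis using neg[of "x - y"] by simp
  qed
qed

lemma sum_convex_upward:
  assumes K: "is_cone K" and cA: "convex A" and up: "upward K A" and ac: "antichain_convex K S"
  shows "convex {a + s | a s. a \<in> A \<and> s \<in> S} \<and> upward K {a + s | a s. a \<in> A \<and> s \<in> S}"
proof
  let ?B = "{a + s | a s. a \<in> A \<and> s \<in> S}"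
  have Kc: "\<And>c t. c \<in> K \<Longrightarrow> t > 0 \<Longrightarrow> t *\<^sub>R c \<in> K" using K unfolding is_cone_def by auto
  have upA: "\<And>a c. a \<in> A \<Longrightarrow> c \<in> K \<Longrightarrow> a + c \<in> A" using up unfolding upward_def by auto
  show "upward K ?B" unfolding upward_def
  proof (intro ballI)
    fix b c assume "b \<in> ?B" "c \<in> K"
    then obtain a s where h: "b = a + s" "a \<in> A" "s \<in> S" by blast
    have "b + c = (a + c) + s" using h by (simp add: algebra_simps)
    then show "b + c \<in> ?B" using h upA[OF h(2) \<open>c \<in> K\<close>] by blast
  qed
  show "convex ?B" unfolding convex_def
  proof (intro ballI allI impI)
    fix x y :: 'a and u v :: real
    assume x: "x \<in> ?B" and y: "y \<in> ?B" and uv: "0 \<le> u" "0 \<le> v" "u + v = 1"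
    then have v: "v = 1 - u" by simp
    obtain a1 s1 where h1: "x = a1 + s1" "a1 \<in> A" "s1 \<in> S" using x by blast
    obtain a2 s2 where h2: "y = a2 + s2" "a2 \<in> A" "s2 \<in> S" using y by blast
    have aa: "u *\<^sub>R a1 + v *\<^sub>R a2 \<in> A" using cA h1 h2 uv unfolding convex_def by auto
    from h1(3) h2(3) ac show "u *\<^sub>R x + v *\<^sub>R y \<in> ?B"
    proof (cases rule: ac_cases)
      case ac
      have "u *\<^sub>R s1 + v *\<^sub>R s2 \<in> S" using ac[of u] uv v by simp
      moreover have "u *\<^sub>R x + v *\<^sub>R y = (u *\<^sub>R a1 + v *\<^sub>R a2) + (u *\<^sub>R s1 + v *\<^sub>R s2)"
        unfolding h1(1) h2(1) by (simp add: algebra_simps)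
      ultimately show ?thesis using aa by blast
    next
      case (pos c)
      have e: "u *\<^sub>R x + v *\<^sub>R y = (u *\<^sub>R a1 + v *\<^sub>R a2 + v *\<^sub>R c) + s1"
        unfolding h1(1) h2(1) pos(2) v by (simp add: algebra_simps)
      show ?thesis
      proof (cases "v = 0")
        case True
        then have "u *\<^sub>R x + v *\<^sub>R y = (u *\<^sub>R a1 + v *\<^sub>R a2) + s1" using e by simp
        then show ?thesis using aa h1 by blast
      next
        case False
        then have "u *\<^sub>R a1 + v *\<^sub>R a2 + v *\<^sub>R c \<in> A" using upA[OF aa Kc[OF pos(1)]] uv by simp
        then show ?thesis using e h1 by blast
      qed
    next
      case (neg c)
      have e: "u *\<^sub>R x + v *\<^sub>R y = (u *\<^sub>R a1 + v *\<^sub>R a2 + u *\<^sub>R c) + s2"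
        unfolding h1(1) h2(1) neg(2) v by (simp add: algebra_simps)
      show ?thesis
      proof (cases "u = 0")
        case True
        then have "u *\<^sub>R x + v *\<^sub>R y = (u *\<^sub>R a1 + v *\<^sub>R a2) + s2" using e by simp
        then show ?thesis using aa h2 by blast
      next
        case False
        then have "u *\<^sub>R a1 + v *\<^sub>R a2 + u *\<^sub>R c \<in> A" using upA[OF aa Kc[OF neg(1)]] uv by simp
        then show ?thesis using e h2 by blast
      qed
    qed
  qed
qed

lemma diff_convex_upward:
  assumes K: "is_cone K" and cA: "convex A" and up: "upward K A" and ac: "antichain_convex K S"
  shows "convex {a - s | a s. a \<in> A \<and> s \<in> S} \<and> upward K {a - s | a s. a \<in> A \<and> s \<in> S}"
proof
  let ?B = "{a - s | a s. a \<in> A \<and> s \<in> S}"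
  have Kc: "\<And>c t. c \<in> K \<Longrightarrow> t > 0 \<Longrightarrow> t *\<^sub>R c \<in> K" using K unfolding is_cone_def by auto
  have upA: "\<And>a c. a \<in> A \<Longrightarrow> c \<in> K \<Longrightarrow> a + c \<in> A" using up unfolding upward_def by auto
  show "upward K ?B" unfolding upward_def
  proof (intro ballI)
    fix b c assume "b \<in> ?B" "c \<in> K"
    then obtain a s where h: "b = a - s" "a \<in> A" "s \<in> S" by blast
    have "b + c = (a + c) - s" using h by (simp add: algebra_simps)
    then show "b + c \<in> ?B" using h upA[OF h(2) \<open>c \<in> K\<close>] by blast
  qed
  show "convex ?B" unfolding convex_def
  proof (intro ballI allI impI)
    fix x y :: 'a and u v :: real
    assume x: "x \<in> ?B" and y: "y \<in> ?B" and uv: "0 \<le> u" "0 \<le> v" "u + v = 1"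
    then have v: "v = 1 - u" by simp
    obtain a1 s1 where h1: "x = a1 - s1" "a1 \<in> A" "s1 \<in> S" using x by blast
    obtain a2 s2 where h2: "y = a2 - s2" "a2 \<in> A" "s2 \<in> S" using y by blast
    have aa: "u *\<^sub>R a1 + v *\<^sub>R a2 \<in> A" using cA h1 h2 uv unfolding convex_def by auto
    from h1(3) h2(3) ac show "u *\<^sub>R x + v *\<^sub>R y \<in> ?B"
    proof (cases rule: ac_cases)
      case ac
      have "u *\<^sub>R s1 + v *\<^sub>R s2 \<in> S" using ac[of u] uv v by simp
      moreover have "u *\<^sub>R x + v *\<^sub>R y = (u *\<^sub>R a1 + v *\<^sub>R a2) - (u *\<^sub>R s1 + v *\<^sub>R s2)"
        unfolding h1(1) h2(1) by (simp add: algebra_simps)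
      ultimately show ?thesis using aa by blast
    next
      case (pos c)
      have e: "u *\<^sub>R x + v *\<^sub>R y = (u *\<^sub>R a1 + v *\<^sub>R a2 + u *\<^sub>R c) - s2"
        unfolding h1(1) h2(1) pos(2) v by (simp add: algebra_simps)
      show ?thesis
      proof (cases "u = 0")
        case True
        then have "u *\<^sub>R x + v *\<^sub>R y = (u *\<^sub>R a1 + v *\<^sub>R a2) - s2" using e by simp
        then show ?thesis using aa h2 by blast
      next
        case False
        then have "u *\<^sub>R a1 + v *\<^sub>R a2 + u *\<^sub>R c \<in> A" using upA[OF aa Kc[OF pos(1)]] uv by simp
        then show ?thesis using e h2 by blast
      qed
    next
      case (neg c)
      have e: "u *\<^sub>R x + v *\<^sub>R y = (u *\<^sub>R a1 + v *\<^sub>R a2 + v *\<^sub>R c) - s1"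
        unfolding h1(1) h2(1) neg(2) v by (simp add: algebra_simps)
      show ?thesis
      proof (cases "v = 0")
        case True
        then have "u *\<^sub>R x + v *\<^sub>R y = (u *\<^sub>R a1 + v *\<^sub>R a2) - s1" using e by simp
        then show ?thesis using aa h1 by blast
      next
        case False
        then have "u *\<^sub>R a1 + v *\<^sub>R a2 + v *\<^sub>R c \<in> A" using upA[OF aa Kc[OF neg(1)]] uv by simp
        then show ?thesis using e h1 by blast
      qed
    qed
  qed
qed



lemma convex_interior_step:
  fixes X :: "'a::topological_real_vector set"
  assumes cX: "convex X" and x: "x \<in> X" and a: "a \<in> interior X" and t: "0 < t" "t \<le> 1"
  shows "(1 - t) *\<^sub>R x + t *\<^sub>R a \<in> interior X"
proof -
  obtain U where U: "open U" "a \<in> U" "U \<subseteq> X" using a by (rule interiorE)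
  let ?V = "(\<lambda>u. (1 - t) *\<^sub>R x + t *\<^sub>R u) ` U"
  have "open ?V" using open_affine_image[OF U(1), of t "(1 - t) *\<^sub>R x"] t by simp
  moreover have "(1 - t) *\<^sub>R x + t *\<^sub>R a \<in> ?V" using U(2) by blast
  moreover have "?V \<subseteq> X"
  proof
    fix w assume "w \<in> ?V"
    then obtain u where "u \<in> U" "w = (1 - t) *\<^sub>R x + t *\<^sub>R u" by blast
    then show "w \<in> X" using cX x U(3) t unfolding convex_def by auto
  qed
  ultimately show ?thesis by (rule interiorI)
qed

lemma convex_interior_tvs:
  fixes X :: "'a::topological_real_vector set"
  assumes cX: "convex X"
  shows "convex (interior X)"
  unfolding convex_def
proof (intro ballI allI impI)
  fix x y :: 'a and u v :: real
  assume x: "x \<in> interior X" and y: "y \<in> interior X" and uv: "0 \<le> u" "0 \<le> v" "u + v = 1"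
  show "u *\<^sub>R x + v *\<^sub>R y \<in> interior X"
  proof (cases "v = 0")
    case True then show ?thesis using x uv by simp
  next
    case False
    then have "(1 - v) *\<^sub>R x + v *\<^sub>R y \<in> interior X"
      using convex_interior_step[OF cX interior_subset[THEN subsetD, OF x] y] uv by simp
    moreover have "u = 1 - v" using uv by simp
    ultimately show ?thesis by simp
  qed
qed

lemma upward_interior:
  fixes X :: "'a::topological_real_vector set"
  assumes "upward K X"
  shows "upward K (interior X)"
  unfolding upward_def
proof (intro ballI)
  fix x c assume x: "x \<in> interior X" and c: "c \<in> K"
  obtain U where U: "open U" "x \<in> U" "U \<subseteq> X" using x by (rule interiorE)
  let ?V = "(\<lambda>u. c + u) ` U"
  have "open ?V" using open_translate[OF U(1)] .
  moreover have "x + c \<in> ?V" using U(2) by (metis add.commute imageI)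
  moreover have "?V \<subseteq> X" using U(3) assms c unfolding upward_def by (auto simp: add.commute)
  ultimately show "x + c \<in> interior X" by (rule interiorI)
qed

lemma msum_0: "msum A 0 = {0}"
  unfolding msum_def by auto

lemma msum_Suc: "msum A (Suc k) = {p + q | p q. p \<in> msum A k \<and> q \<in> A k}"
proof
  show "msum A (Suc k) \<subseteq> {p + q | p q. p \<in> msum A k \<and> q \<in> A k}"
  proof
    fix z assume "z \<in> msum A (Suc k)"
    then obtain a where a: "z = (\<Sum>i<Suc k. a i)" "\<forall>i<Suc k. a i \<in> A i" unfolding msum_def by blast
    have "(\<Sum>i<k. a i) \<in> msum A k" using a(2) unfolding msum_def by auto
    moreover have "a k \<in> A k" using a(2) by simp
    moreover have "z = (\<Sum>i<k. a i) + a k" using a(1) by simp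
    ultimately show "z \<in> {p + q | p q. p \<in> msum A k \<and> q \<in> A k}" by blast
  qed
  show "{p + q | p q. p \<in> msum A k \<and> q \<in> A k} \<subseteq> msum A (Suc k)"
  proof
    fix z assume "z \<in> {p + q | p q. p \<in> msum A k \<and> q \<in> A k}"
    then obtain p q where pq: "z = p + q" "p \<in> msum A k" "q \<in> A k" by blast
    then obtain a where a: "p = (\<Sum>i<k. a i)" "\<forall>i<k. a i \<in> A i" unfolding msum_def by blast
    define b where "b = a(k := q)"
    have "(\<Sum>i<k. b i) = (\<Sum>i<k. a i)" unfolding b_def by (intro sum.cong) auto
    then have "z = (\<Sum>i<Suc k. b i)" using pq a unfolding b_def by simp
    moreover have "\<forall>i<Suc k. b i \<in> A i" using a pq unfolding b_def by (auto simp: less_Suc_eq)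
    ultimately show "z \<in> msum A (Suc k)" unfolding msum_def by blast
  qed
qed

lemma msum_nonempty: "(\<forall>i<k. A i \<noteq> {}) \<Longrightarrow> msum A k \<noteq> {}"
proof (induction k)
  case 0 then show ?case by (simp add: msum_0)
next
  case (Suc k)
  then obtain p where "p \<in> msum A k" by auto
  moreover obtain q where "q \<in> A k" using Suc.prems by auto
  ultimately show ?case unfolding msum_Suc by blast
qed

lemma real_limit_le:
  fixes u v w :: real
  assumes "\<And>t. 0 < t \<Longrightarrow> t \<le> 1 \<Longrightarrow> (1 - t) * u + t * v \<le> w"
  shows "u \<le> w"
proof (rule ccontr)
  assume "\<not> u \<le> w"
  then have d: "u - w > 0" by simp
  define t where "t = (u - w) / (2 * (\<bar>u - v\<bar> + (u - w)))"
  have den: "2 * (\<bar>u - v\<bar> + (u - w)) > 0" using d by (intro mult_pos_pos add_nonneg_pos) auto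
  have t0: "t > 0" unfolding t_def using d den by simp
  have aa: "\<bar>u - v\<bar> \<ge> 0" by (rule abs_ge_zero)
  have le: "u - w \<le> 2 * (\<bar>u - v\<bar> + (u - w))" using aa d by (smt (verit))
  have t1: "t \<le> 1" unfolding t_def using divide_le_eq_1_pos[OF den] le by blast
  have "t * \<bar>u - v\<bar> \<le> (u - w) / 2"
  proof -
    have "t * \<bar>u - v\<bar> = (u - w) * \<bar>u - v\<bar> / (2 * (\<bar>u - v\<bar> + (u - w)))" unfolding t_def by simp
    also have "\<dots> \<le> (u - w) * (\<bar>u - v\<bar> + (u - w)) / (2 * (\<bar>u - v\<bar> + (u - w)))"
      using d den by (intro divide_right_mono mult_left_mono) auto
    also have "\<dots> = (u - w) / 2"
    proof -
      have gen: "\<And>a b::real. b > 0 \<Longrightarrow> a * b / (2 * b) = a / 2" by simp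
      have "\<bar>u - v\<bar> + (u - w) > 0" using den by simp
      from gen[OF this] show ?thesis .
    qed
    finally show ?thesis .
  qed
  moreover have "(1 - t) * u + t * v = u - t * (u - v)" by (simp add: algebra_simps)
  moreover have "t * (u - v) \<le> t * \<bar>u - v\<bar>" using t0 by (intro mult_left_mono) auto
  moreover have gen: "u - P > w" if "P \<le> Q" "Q \<le> (u - w) / 2" for P Q using that d by argo
  ultimately have "(1 - t) * u + t * v > w" by metis
  then show False using assms[OF t0 t1] by linarith
qed



lemma main_gen:
  fixes K :: "'a::topological_real_vector set" and Xs Ys :: "nat \<Rightarrow> 'a set" and m n :: nat
  assumes K: "is_cone K" and m: "m \<ge> 1"
    and X: "\<forall>i<m. Xs i \<noteq> {} \<and> antichain_convex K (Xs i)"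
    and Y: "\<forall>j<n. Ys j \<noteq> {} \<and> antichain_convex K (Ys j)"
    and ne: "interior (msum Xs m) \<noteq> {}" and dis: "interior (msum Xs m) \<inter> msum Ys n = {}"
    and up: "upward K (Xs 0)"
  shows "separated (msum Xs m) (msum Ys n)"
proof -
  have Xk: "k < m \<Longrightarrow> convex (msum Xs (Suc k)) \<and> upward K (msum Xs (Suc k))" for k
  proof (induction k)
    case 0
    have eq: "msum Xs (Suc 0) = Xs 0" unfolding msum_Suc msum_0 by auto
    have "antichain_convex K (Xs 0)" using X 0 by auto
    then show ?case unfolding eq using upward_ac_convex[OF K up] up by auto
  next
    case (Suc k)
    then have IH: "convex (msum Xs (Suc k))" "upward K (msum Xs (Suc k))" by auto
    have "antichain_convex K (Xs (Suc k))" using X Suc.prems by auto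
    from sum_convex_upward[OF K IH this] show ?case unfolding msum_Suc[of Xs "Suc k"] .
  qed
  obtain m' where m': "m = Suc m'" using m by (cases m) auto
  have cX: "convex (msum Xs m)" and uX: "upward K (msum Xs m)" using Xk[of m'] m' by auto
  define A where "A = interior (msum Xs m)"
  have cA: "convex A" unfolding A_def by (rule convex_interior_tvs[OF cX])
  have uA: "upward K A" unfolding A_def by (rule upward_interior[OF uX])
  have oA: "open A" unfolding A_def by simp
  define Dk where "Dk k = {a - y | a y. a \<in> A \<and> y \<in> msum Ys k}" for k
  have Dconv: "k \<le> n \<Longrightarrow> convex (Dk k) \<and> upward K (Dk k)" for k
  proof (induction k)
    case 0
    have "Dk 0 = A" unfolding Dk_def msum_0 by auto
    then show ?case using cA uA by simp
  next
    case (Suc k)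
    then have IH: "convex (Dk k)" "upward K (Dk k)" by auto
    have ac: "antichain_convex K (Ys k)" using Y Suc.prems by auto
    have eq: "Dk (Suc k) = {d - q | d q. d \<in> Dk k \<and> q \<in> Ys k}"
    proof
      show "Dk (Suc k) \<subseteq> {d - q | d q. d \<in> Dk k \<and> q \<in> Ys k}"
      proof
        fix z assume "z \<in> Dk (Suc k)"
        then obtain a p q where h: "z = a - (p + q)" "a \<in> A" "p \<in> msum Ys k" "q \<in> Ys k"
          unfolding Dk_def msum_Suc by blast
        have "a - p \<in> Dk k" using h unfolding Dk_def by blast
        moreover have "z = (a - p) - q" using h by (simp add: algebra_simps)
        ultimately show "z \<in> {d - q | d q. d \<in> Dk k \<and> q \<in> Ys k}" using h by blast
      qed
      show "{d - q | d q. d \<in> Dk k \<and> q \<in> Ys k} \<subseteq> Dk (Suc k)"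
      proof
        fix z assume "z \<in> {d - q | d q. d \<in> Dk k \<and> q \<in> Ys k}"
        then obtain d q where h: "z = d - q" "d \<in> Dk k" "q \<in> Ys k" by blast
        then obtain a p where h2: "d = a - p" "a \<in> A" "p \<in> msum Ys k" unfolding Dk_def by blast
        have "p + q \<in> msum Ys (Suc k)" unfolding msum_Suc using h h2 by blast
        moreover have "z = a - (p + q)" using h h2 by (simp add: algebra_simps)
        ultimately show "z \<in> Dk (Suc k)" using h2 unfolding Dk_def by blast
      qed
    qed
    from diff_convex_upward[OF K IH ac] show ?case unfolding eq .
  qed
  let ?Y = "msum Ys n"
  have Yne: "?Y \<noteq> {}" using msum_nonempty[of n Ys] Y by auto
  have eqD: "Dk n = (\<Union>y\<in>?Y. (\<lambda>u. (- y) + u) ` A)" unfolding Dk_def by auto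
  have "open (\<Union>y\<in>?Y. (\<lambda>u. (- y) + u) ` A)" by (rule open_UN) (intro ballI open_translate[OF oA])
  then have oD: "open (Dk n)" using eqD by simp
  have zD: "0 \<notin> Dk n" using dis unfolding Dk_def A_def by auto
  obtain a0 where a0: "a0 \<in> A" using ne A_def by auto
  obtain y0 where y0: "y0 \<in> ?Y" using Yne by auto
  have eD: "a0 - y0 \<in> Dk n" using a0 y0 unfolding Dk_def by blast
  obtain f :: "'a \<Rightarrow> real" where fl: "linear f" and fc: "continuous_on UNIV f"
    and fn: "f \<noteq> (\<lambda>_. 0)" and fD: "\<forall>d\<in>Dk n. f d \<ge> 0"
    using separation_open_convex[OF oD Dconv[of n, THEN conjunct1] eD zD] by auto
  define g where "g x = - f x" for x
  have gadd: "g (x + y) = g x + g y" for x y unfolding g_def using linear_add[OF fl] by simp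
  have gscale: "g (c *\<^sub>R x) = c * g x" for c x unfolding g_def using linear_scale[OF fl] by simp
  have gl: "linear g" by (rule linearI) (simp_all add: gadd gscale)
  have gc: "continuous_on UNIV g" unfolding g_def by (intro continuous_on_minus fc)
  have gn: "g \<noteq> (\<lambda>_. 0)"
  proof
    assume "g = (\<lambda>_. 0)"
    then have "f = (\<lambda>_. 0)" unfolding g_def by (metis minus_zero neg_equal_iff_equal)
    then show False using fn by simp
  qed
  have gAY: "g a \<le> g y" if "a \<in> A" "y \<in> ?Y" for a y
  proof -
    have "a - y \<in> Dk n" using that unfolding Dk_def by blast
    then have "f (a - y) \<ge> 0" using fD by blast
    then show ?thesis unfolding g_def using linear_diff[OF fl, of a y] by simp
  qed
  have gXY: "g x \<le> g y" if x: "x \<in> msum Xs m" and y: "y \<in> ?Y" for x y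
  proof (rule real_limit_le[where v = "g a0"])
    fix t :: real assume t: "0 < t" "t \<le> 1"
    have "(1 - t) *\<^sub>R x + t *\<^sub>R a0 \<in> A"
      using convex_interior_step[OF cX x _ t] a0 unfolding A_def by blast
    then have "g ((1 - t) *\<^sub>R x + t *\<^sub>R a0) \<le> g y" using gAY y by blast
    then show "(1 - t) * g x + t * g a0 \<le> g y" by (simp add: gadd gscale)
  qed
  have "(SUP x\<in>msum Xs m. ereal (g x)) \<le> (INF y\<in>?Y. ereal (g y))"
    by (intro SUP_least INF_greatest) (simp add: gXY)
  then show ?thesis unfolding separated_def using gl gc gn by blast
qed

lemma cone_neg:
  assumes "is_cone C" shows "is_cone (uminus ` C)"
  unfolding is_cone_def
proof (intro allI impI ballI)
  fix l :: real and c assume l: "l > 0" and c: "c \<in> uminus ` C"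
  then obtain c' where c': "c' \<in> C" "c = - c'" by blast
  have "l *\<^sub>R c' \<in> C" using assms l c' unfolding is_cone_def by blast
  moreover have "l *\<^sub>R c = - (l *\<^sub>R c')" using c' by simp
  ultimately show "l *\<^sub>R c \<in> uminus ` C" by blast
qed

lemma ac_neg: "antichain_convex C S \<Longrightarrow> antichain_convex (uminus ` C) S"
proof -
  have "uminus ` C \<union> uminus ` uminus ` C = C \<union> uminus ` C" by (auto simp: image_image)
  then show "antichain_convex C S \<Longrightarrow> antichain_convex (uminus ` C) S"
    unfolding antichain_convex_def by simp
qed

lemma down_neg: "downward C S \<Longrightarrow> upward (uminus ` C) S"
  unfolding downward_def upward_def by auto

theorem theorem8:
  fixes C :: "'a::topological_real_vector set"
    and Xs Ys :: "nat \<Rightarrow> 'a set"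
    and m n :: nat
  assumes "is_cone C"
    and "m \<ge> 1" and "n \<ge> 1"
    and "\<forall>i<m. Xs i \<noteq> {} \<and> antichain_convex C (Xs i)"
    and "\<forall>j<n. Ys j \<noteq> {} \<and> antichain_convex C (Ys j)"
    and "interior (msum Xs m) \<noteq> {}"
    and "interior (msum Xs m) \<inter> msum Ys n = {}"
  shows "(upward C (Xs 0) \<longrightarrow> separated (msum Xs m) (msum Ys n)) \<and>
         (downward C (Xs 0) \<longrightarrow> separated (msum Xs m) (msum Ys n))"
proof (intro conjI impI)
  assume "upward C (Xs 0)"
  then show "separated (msum Xs m) (msum Ys n)"
    using main_gen[OF assms(1,2,4,5,6,7)] by blast
next
  assume "downward C (Xs 0)"
  then have "upward (uminus ` C) (Xs 0)" by (rule down_neg)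
  moreover have "\<forall>i<m. Xs i \<noteq> {} \<and> antichain_convex (uminus ` C) (Xs i)" using assms(4) ac_neg by blast
  moreover have "\<forall>j<n. Ys j \<noteq> {} \<and> antichain_convex (uminus ` C) (Ys j)" using assms(5) ac_neg by blast
  ultimately show "separated (msum Xs m) (msum Ys n)"
    using main_gen[OF cone_neg[OF assms(1)] assms(2) _ _ assms(6,7)] by blast
qed

end
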